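(* Consider the GIP model with threshold-type bounds with uniform thresholds $\theta_l,\theta_h$ and $l_{j,0}=1$ for all $v_j\in V$, where $\theta_l>0$, and $h_{j,0}\ge 1$ and $\theta_h h_{j,0}>\theta_l$ for every $j$. Consider the MLT model on the same network with parameters $l'_j=\theta_l\alpha$, $h'_j=\theta_h\alpha h_{j,0}$, $m_j=\theta_h h_{j,0}/\theta_l$ (so $h'_{j,0}=h_{j,0}$). Let $\mathbf x(0)$ be an admissible GIP initial state and let the MLT model start from $\mathbf x'(0)=\mathbf x(0)$. Then $$x_j(t)=(\theta_l\alpha)^t\,x'_j(t)\qquad\text{for all }t\ge 0,\ v_j\in V.$$ Consequently, for $\gamma\in[0,1)$ and $\gamma'=1-(1-\gamma)\theta_l\alpha$, one has $(1-\gamma)^t x_j(t)=(1-\gamma')^t x'_j(t)$ for every $t\ge0$ and $j$, so that the overall influences $\sum_{t\ge1}(1-\gamma)^t x_j(t)$ and $\sum_{t\ge1}(1-\gamma')^t x'_j(t)$ coincide (whenever either converges).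
   Context: Let $G=(V,E)$ be a directed weighted network with node set $V=\{v_1,\dots,v_n\}$ and weighted adjacency matrix $\mathbf W=(W_{ij})$, where $W_{ij}>0$ if $(v_i,v_j)\in E$ and $W_{ij}=0$ otherwise; let $\alpha=\sum_{(v_i,v_j)\in E}W_{ij}/|E|$ be the mean edge weight. The general information propagation (GIP) model with lower bounds $\{l_{j,t}\}$ and upper bounds $\{h_{j,t}\}$ (real numbers with $0\le l_{j,t}\le h_{j,t}$, $l_{j,0}>0$) is the dynamics $x_j(t)=f_{j,t}(\sum_i W_{ij}x_i(t-1))$ for $t>0$, where $f_{j,t}(x)=0$ if $x<l_{j,t}$, $f_{j,t}(x)=x$ if $l_{j,t}\le x<h_{j,t}$, $f_{j,t}(x)=h_{j,t}$ if $x\ge h_{j,t}$; an initial state is admissible if $x_j(0)\in\{0\}\cup[l_{j,0},h_{j,0}]$ for all $j$. Threshold-type bounds with uniform thresholds $\theta_l,\theta_h$ are: for all $t>0$, $v_j\in V$, $l_{j,t}=(\theta_l\alpha)^t l_{j,0}$ and $h_{j,t}=\theta_h\theta_l^{t-1}\alpha^t h_{j,0}$. The multi-valued linear threshold (MLT) model with parameters $l'_j<h'_j$, $m_j$ is the dynamics $x'_j(t)=g_j(\sum_i W_{ij}x'_i(t-1))$ for $t>0$, where $g_j(y)=0$ if $y<l'_j$, $g_j(y)=\frac{m_j-1}{h'_j-l'_j}(y-l'_j)+1$ if $l'_j\le y<h'_j$, and $g_j(y)=m_j$ if $y\ge h'_j$, with initial values $x'_j(0)\in\{0\}\cup[1,h'_{j,0}]$.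 *)

theory Defs
  imports Complex_Main
begin

definition edges :: "nat \<Rightarrow> (nat \<Rightarrow> nat \<Rightarrow> real) \<Rightarrow> (nat \<times> nat) set" where
  "edges n W = {(i, j). i < n \<and> j < n \<and> W i j > 0}"

definition mean_weight :: "nat \<Rightarrow> (nat \<Rightarrow> nat \<Rightarrow> real) \<Rightarrow> real" where
  "mean_weight n W = (\<Sum>(i, j)\<in>edges n W. W i j) / real (card (edges n W))"

definition gip_f :: "real \<Rightarrow> real \<Rightarrow> real \<Rightarrow> real" where
  "gip_f l h x = (if x < l then 0 else if x < h then x else h)"

definition gip_dynamics ::
  "nat \<Rightarrow> (nat \<Rightarrow> nat \<Rightarrow> real) \<Rightarrow> (nat \<Rightarrow> nat \<Rightarrow> real) \<Rightarrow> (nat \<Rightarrow> nat \<Rightarrow> real)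
   \<Rightarrow> (nat \<Rightarrow> nat \<Rightarrow> real) \<Rightarrow> bool" where
  "gip_dynamics n W l h x \<longleftrightarrow>
     (\<forall>t j. j < n \<longrightarrow> x (Suc t) j = gip_f (l j (Suc t)) (h j (Suc t)) (\<Sum>i<n. W i j * x t i))"

definition gip_admissible ::
  "nat \<Rightarrow> (nat \<Rightarrow> nat \<Rightarrow> real) \<Rightarrow> (nat \<Rightarrow> nat \<Rightarrow> real) \<Rightarrow> (nat \<Rightarrow> real) \<Rightarrow> bool" where
  "gip_admissible n l h x0 \<longleftrightarrow> (\<forall>j<n. x0 j = 0 \<or> (l j 0 \<le> x0 j \<and> x0 j \<le> h j 0))"

definition threshold_l :: "real \<Rightarrow> real \<Rightarrow> (nat \<Rightarrow> real) \<Rightarrow> nat \<Rightarrow> nat \<Rightarrow> real" where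
  "threshold_l \<theta>l \<alpha> l0 j t = (if t = 0 then l0 j else (\<theta>l * \<alpha>) ^ t * l0 j)"

definition threshold_h :: "real \<Rightarrow> real \<Rightarrow> real \<Rightarrow> (nat \<Rightarrow> real) \<Rightarrow> nat \<Rightarrow> nat \<Rightarrow> real" where
  "threshold_h \<theta>h \<theta>l \<alpha> h0 j t = (if t = 0 then h0 j else \<theta>h * \<theta>l ^ (t - 1) * \<alpha> ^ t * h0 j)"

definition mlt_g :: "real \<Rightarrow> real \<Rightarrow> real \<Rightarrow> real \<Rightarrow> real" where
  "mlt_g l' h' m y = (if y < l' then 0 else if y < h' then (m - 1) / (h' - l') * (y - l') + 1 else m)"

definition mlt_dynamics ::
  "nat \<Rightarrow> (nat \<Rightarrow> nat \<Rightarrow> real) \<Rightarrow> (nat \<Rightarrow> real) \<Rightarrow> (nat \<Rightarrow> real) \<Rightarrow> (nat \<Rightarrow> real)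
   \<Rightarrow> (nat \<Rightarrow> nat \<Rightarrow> real) \<Rightarrow> bool" where
  "mlt_dynamics n W l' h' m x' \<longleftrightarrow>
     (\<forall>t j. j < n \<longrightarrow> x' (Suc t) j = mlt_g (l' j) (h' j) (m j) (\<Sum>i<n. W i j * x' t i))"

end

theory Submission
  imports Defs
begin


lemma key:
  fixes c k M S :: real
  assumes c: "c > 0" and k: "k > 0" and M: "M > 1"
  shows "gip_f (k * c) (k * c * M) (k * S) = k * c * mlt_g c (c * M) M S"
proof -
  have e: "(M - 1) / (c * M - c) * (S - c) + 1 = S / c"
    using c M by (simp add: field_simps)
  have a: "(k * S < k * c) = (S < c)" using k by simp
  have b: "(k * S < k * c * M) = (S < c * M)" using k by (simp add: mult.assoc)
  show ?thesis unfolding gip_f_def mlt_g_def a b e using c by (simp add: field_simps)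
qed

lemma alpha_nonneg:
  assumes "\<And>i j. i < n \<Longrightarrow> j < n \<Longrightarrow> W i j \<ge> 0"
  shows "mean_weight n W \<ge> 0"
  unfolding mean_weight_def
  by (intro divide_nonneg_nonneg sum_nonneg) (auto simp: edges_def)

theorem theorem2:
  fixes n :: nat and W :: "nat \<Rightarrow> nat \<Rightarrow> real"
    and \<theta>l \<theta>h :: real and h0 :: "nat \<Rightarrow> real"
    and x x' :: "nat \<Rightarrow> nat \<Rightarrow> real" and \<gamma> :: real
  defines "\<alpha> \<equiv> mean_weight n W"
  defines "\<gamma>' \<equiv> 1 - (1 - \<gamma>) * \<theta>l * \<alpha>"
  assumes W_nonneg: "\<And>i j. i < n \<Longrightarrow> j < n \<Longrightarrow> W i j \<ge> 0"
    and \<theta>l_pos: "\<theta>l > 0"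
    and h0_ge: "\<And>j. j < n \<Longrightarrow> h0 j \<ge> 1"
    and h0_gt: "\<And>j. j < n \<Longrightarrow> \<theta>h * h0 j > \<theta>l"
    and gip: "gip_dynamics n W (threshold_l \<theta>l \<alpha> (\<lambda>_. 1)) (threshold_h \<theta>h \<theta>l \<alpha> h0) x"
    and adm: "gip_admissible n (threshold_l \<theta>l \<alpha> (\<lambda>_. 1)) (threshold_h \<theta>h \<theta>l \<alpha> h0) (x 0)"
    and mlt: "mlt_dynamics n W (\<lambda>_. \<theta>l * \<alpha>) (\<lambda>j. \<theta>h * \<alpha> * h0 j) (\<lambda>j. \<theta>h * h0 j / \<theta>l) x'"
    and init: "\<And>j. j < n \<Longrightarrow> x' 0 j = x 0 j"
    and \<gamma>_range: "0 \<le> \<gamma>" "\<gamma> < 1"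
  shows "(\<forall>t. \<forall>j<n. x t j = (\<theta>l * \<alpha>) ^ t * x' t j)
       \<and> (\<forall>t. \<forall>j<n. (1 - \<gamma>) ^ t * x t j = (1 - \<gamma>') ^ t * x' t j)
       \<and> (\<forall>j<n. \<forall>s. (\<lambda>t. (1 - \<gamma>) ^ Suc t * x (Suc t) j) sums s
                  \<longleftrightarrow> (\<lambda>t. (1 - \<gamma>') ^ Suc t * x' (Suc t) j) sums s)"
proof -
  define c where "c = \<theta>l * \<alpha>"
  have a0: "\<alpha> \<ge> 0" unfolding \<alpha>_def using alpha_nonneg W_nonneg by blast
  have c0: "c \<ge> 0" using a0 \<theta>l_pos by (simp add: c_def)
  have main: "\<forall>j<n. x t j = c ^ t * x' t j" for t
  proof (induction t)
    case 0
    then show ?case using init by simp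
  next
    case (Suc t)
    show ?case
    proof (intro allI impI)
      fix j assume j: "j < n"
      define S where "S = (\<Sum>i<n. W i j * x' t i)"
      have sx: "(\<Sum>i<n. W i j * x t i) = c ^ t * S"
        unfolding S_def sum_distrib_left using Suc.IH
        by (intro sum.cong) auto
      define M where "M = \<theta>h * h0 j / \<theta>l"
      have M1: "M > 1" using h0_gt[OF j] \<theta>l_pos by (simp add: M_def field_simps)
      have xs: "x (Suc t) j = gip_f (c ^ t * c) (c ^ t * c * M) (c ^ t * S)"
      proof -
        have "threshold_h \<theta>h \<theta>l \<alpha> h0 j (Suc t) = c ^ t * c * M"
          using \<theta>l_pos by (simp add: threshold_h_def c_def M_def power_mult_distrib field_simps)
        moreover have "threshold_l \<theta>l \<alpha> (\<lambda>_. 1) j (Suc t) = c ^ t * c"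
          by (simp add: threshold_l_def c_def)
        ultimately show ?thesis using gip j sx unfolding gip_dynamics_def by simp
      qed
      have xs': "x' (Suc t) j = mlt_g c (c * M) M S"
      proof -
        have "\<theta>h * \<alpha> * h0 j = c * M" using \<theta>l_pos by (simp add: c_def M_def field_simps)
        then show ?thesis using mlt j unfolding mlt_dynamics_def S_def c_def M_def by simp
      qed
      show "x (Suc t) j = c ^ Suc t * x' (Suc t) j"
      proof (cases "c = 0")
        case True
        then show ?thesis using xs by (simp add: gip_f_def)
      next
        case False
        then have cp: "c > 0" using c0 by simp
        show ?thesis using key[OF cp _ M1, of "c ^ t" S] cp xs xs'
          by (simp add: mult.commute mult.left_commute)
      qed
    qed
  qed
  have g: "1 - \<gamma>' = (1 - \<gamma>) * c" unfolding \<gamma>'_def c_def by simp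
  have second: "(1 - \<gamma>) ^ t * x t j = (1 - \<gamma>') ^ t * x' t j" if "j < n" for t j
    using main[of t] that unfolding g by (simp add: power_mult_distrib)
  show ?thesis
  proof (intro conjI allI impI)
    fix t j assume "j < n" then show "x t j = (\<theta>l * \<alpha>) ^ t * x' t j" using main c_def by simp
  next
    fix t j assume "j < n" then show "(1 - \<gamma>) ^ t * x t j = (1 - \<gamma>') ^ t * x' t j" by (rule second)
  next
    fix j s assume j: "j < n"
    have "(\<lambda>t. (1 - \<gamma>) ^ Suc t * x (Suc t) j) = (\<lambda>t. (1 - \<gamma>') ^ Suc t * x' (Suc t) j)"
      using second[OF j, of "Suc _"] by (intro ext) blast
    then show "(\<lambda>t. (1 - \<gamma>) ^ Suc t * x (Suc t) j) sums s
                  \<longleftrightarrow> (\<lambda>t. (1 - \<gamma>') ^ Suc t * x' (Suc t) j) sums s" by simp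
  qed
qed

end
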